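(* $\chi=\mathbb E[|X(-J,-1)|]$ satisfies $1\le\chi\le2$. Moreover, $\chi=2$ if and only if $\lim_{n\to\infty}\mathbb E[\mathcal C(-n,-1)\mathbbm 1_{J>n}]=0$.
   Context: Fix an integer $k\ge 2$ and $p\in[0,1]$. Let $\Theta=\{b_1,\dots,b_k,o_1,\dots,o_k,F\}$, where $b_i$ is a burger of type $i$, $o_i$ is an order of type $i$, and $F$ is a flexible order. Words in $\Theta$ are considered modulo the relations $b_io_i=b_iF=\varnothing$ and $b_io_j=o_jb_i$ for $i\ne j$; $\overline W$ denotes the reduced form of $W$ and $|W|$ its length. In the reduction, each $o_i$ consumes the most recent not-yet-consumed $b_i$ to its left, each $F$ consumes the most recent not-yet-consumed burger of any type to its left, and the reduced word lists the unconsumed orders followed by the unconsumed burgers. Let $(X(n))_{n\in\mathbb Z}$ be i.i.d. with $\mathbb P(X(n)=b_i)=\frac1{2k}$, $\mathbb P(X(n)=o_i)=\frac{1-p}{2k}$ and $\mathbb P(X(n)=F)=\frac p2$. For $m\le n$, set $X(m,n)=\overline{X(m)\cdots X(n)}$. For a word $W$, $\mathcal C(W)$ is the number of burgers minus the number of orders in $W$, and $\mathcal C(m,n)=\mathcal C(X(m,n))$. Let $J$ be the smallest positive integer such that $X(-J,-1)$ contains exactly one burger. *)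

theory Defs
  imports "HOL-Probability.Probability"
begin

text \<open>Symbols: Bg i = burger of type i, Od i = order of type i, Fl = flexible order.
  Types are indexed by i in {0..<k}.\<close>
datatype sym = Bg nat | Od nat | Fl

fun is_burger :: "sym \<Rightarrow> bool" where
  "is_burger (Bg _) = True"
| "is_burger _ = False"

text \<open>One step of the left-to-right reduction. State: (unconsumed orders in order of
  appearance, stack of unconsumed burgers with the most recent first).\<close>
fun red_step :: "sym list \<times> sym list \<Rightarrow> sym \<Rightarrow> sym list \<times> sym list" where
  "red_step (os, bs) (Bg i) = (os, Bg i # bs)"
| "red_step (os, bs) (Od i) =
     (if Bg i \<in> set bs then (os, remove1 (Bg i) bs) else (os @ [Od i], bs))"
| "red_step (os, bs) Fl = (case bs of [] \<Rightarrow> (os @ [Fl], []) | _ # bs' \<Rightarrow> (os, bs'))"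

definition reduce :: "sym list \<Rightarrow> sym list" where
  "reduce w = (case foldl red_step ([], []) w of (os, bs) \<Rightarrow> os @ rev bs)"

definition num_burgers :: "sym list \<Rightarrow> nat" where
  "num_burgers w = length (filter is_burger w)"

definition num_orders :: "sym list \<Rightarrow> nat" where
  "num_orders w = length (filter (\<lambda>s. \<not> is_burger s) w)"

definition Cnt :: "sym list \<Rightarrow> int" where
  "Cnt w = int (num_burgers w) - int (num_orders w)"

definition sym_weight :: "nat \<Rightarrow> real \<Rightarrow> sym \<Rightarrow> real" where
  "sym_weight k p s = (case s of
       Bg i \<Rightarrow> if i < k then 1 / (2 * real k) else 0
     | Od i \<Rightarrow> if i < k then (1 - p) / (2 * real k) else 0
     | Fl \<Rightarrow> p / 2)"

definition sym_pmf :: "nat \<Rightarrow> real \<Rightarrow> sym pmf" where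
  "sym_pmf k p = embed_pmf (sym_weight k p)"

text \<open>The i.i.d. sequence (X(-1), X(-2), ...) : omega j represents X(-(j+1)).\<close>
definition Xspace :: "nat \<Rightarrow> real \<Rightarrow> (nat \<Rightarrow> sym) measure" where
  "Xspace k p = PiM UNIV (\<lambda>_. measure_pmf (sym_pmf k p))"

text \<open>The word X(-m) X(-m+1) ... X(-1).\<close>
definition Xword :: "(nat \<Rightarrow> sym) \<Rightarrow> nat \<Rightarrow> sym list" where
  "Xword \<omega> m = rev (map \<omega> [0..<m])"

definition Xred :: "(nat \<Rightarrow> sym) \<Rightarrow> nat \<Rightarrow> sym list" where
  "Xred \<omega> m = reduce (Xword \<omega> m)"

definition Jtime :: "(nat \<Rightarrow> sym) \<Rightarrow> enat" where
  "Jtime \<omega> = (if \<exists>m>0. num_burgers (Xred \<omega> m) = 1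
     then enat (LEAST m. m > 0 \<and> num_burgers (Xred \<omega> m) = 1) else \<infinity>)"

definition chi :: "nat \<Rightarrow> real \<Rightarrow> ennreal" where
  "chi k p = (\<integral>\<^sup>+ \<omega>. (case Jtime \<omega> of enat m \<Rightarrow> ennreal (real (length (Xred \<omega> m))) | \<infinity> \<Rightarrow> 0)
                 \<partial>Xspace k p)"

end

theory Submission
  imports Defs
begin

definition xi :: "sym \<Rightarrow> int" where "xi s = (if is_burger s then 1 else -1)"

lemma nb_simps[simp]: "num_burgers [] = 0" "num_burgers (x # w) = (if is_burger x then 1 else 0) + num_burgers w"
  "num_burgers (w @ v) = num_burgers w + num_burgers v"
  by (auto simp: num_burgers_def)

lemma no_simps[simp]: "num_orders [] = 0" "num_orders (x # w) = (if is_burger x then 0 else 1) + num_orders w"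
  "num_orders (w @ v) = num_orders w + num_orders v"
  by (auto simp: num_orders_def)

lemma nb_rev[simp]: "num_burgers (rev w) = num_burgers w" by (induction w) auto
lemma no_rev[simp]: "num_orders (rev w) = num_orders w" by (induction w) auto

lemma Cnt_simps[simp]: "Cnt [] = 0" "Cnt (x # w) = xi x + Cnt w" "Cnt (w @ v) = Cnt w + Cnt v"
  "Cnt (rev w) = Cnt w"
  by (auto simp: Cnt_def xi_def)

lemma len_nb_no: "length w = num_burgers w + num_orders w"
  by (induction w) auto

definition inv_st :: "sym list \<times> sym list \<Rightarrow> bool" where
  "inv_st st = ((\<forall>x\<in>set (fst st). \<not> is_burger x) \<and> (\<forall>x\<in>set (snd st). is_burger x))"

lemma len_rm: "x \<in> set b \<Longrightarrow> int (length (remove1 x b)) = int (length b) - 1"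
  apply (simp add: length_remove1) by (cases b) simp_all

lemma inv_step: "inv_st st \<Longrightarrow> inv_st (red_step st s) \<and>
   int (length (snd (red_step st s))) - int (length (fst (red_step st s)))
     = int (length (snd st)) - int (length (fst st)) + xi s"
  apply (cases st; cases s)
  apply (auto simp: inv_st_def xi_def len_rm split: list.splits dest: set_remove1_subset[THEN subsetD])
  done

lemma inv_fold: "inv_st st \<Longrightarrow> inv_st (foldl red_step st w) \<and>
   int (length (snd (foldl red_step st w))) - int (length (fst (foldl red_step st w)))
     = int (length (snd st)) - int (length (fst st)) + Cnt w"
proof (induction w arbitrary: st)
  case Nil then show ?case by simp
next
  case (Cons s w)
  from inv_step[OF Cons.prems] Cons.IH[of "red_step st s"] show ?case by simp
qed

lemma reduce_props: "num_burgers (reduce w) = length (snd (foldl red_step ([],[]) w))"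
   "num_orders (reduce w) = length (fst (foldl red_step ([],[]) w))"
   "Cnt (reduce w) = Cnt w"
proof -
  have i: "inv_st ([],[])" by (simp add: inv_st_def)
  obtain os bs where e: "foldl red_step ([],[]) w = (os, bs)" by fastforce
  from inv_fold[OF i, of w] e have io: "\<forall>x\<in>set os. \<not> is_burger x" "\<forall>x\<in>set bs. is_burger x"
    and c: "int (length bs) - int (length os) = Cnt w" by (auto simp: inv_st_def)
  have "num_burgers os = 0" "num_orders bs = 0" using io
    by (auto simp: num_burgers_def num_orders_def filter_empty_conv)
  moreover have "num_burgers bs = length bs" "num_orders os = length os" using io
    by (auto simp: num_burgers_def num_orders_def intro!: filter_True)
  ultimately have r: "num_burgers (reduce w) = length bs" "num_orders (reduce w) = length os"
    using e by (simp_all add: reduce_def)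
  then show "num_burgers (reduce w) = length (snd (foldl red_step ([],[]) w))"
   "num_orders (reduce w) = length (fst (foldl red_step ([],[]) w))" using e by simp_all
  show "Cnt (reduce w) = Cnt w" using r c by (simp add: Cnt_def)
qed

definition Rins :: "sym list \<Rightarrow> sym list \<Rightarrow> bool" where
  "Rins bs bs' = (bs' = bs \<or> (\<exists>xs ys x. bs = xs @ ys \<and> bs' = xs @ x # ys))"

lemma remove1_ins: "remove1 a (xs @ x # ys) = (if a \<in> set xs then remove1 a xs @ x # ys else if x = a then xs @ ys else xs @ x # remove1 a ys)"
  by (induction xs) auto

lemma snd_red_step: "snd (red_step (os, bs) (Bg i)) = Bg i # bs"
  "snd (red_step (os, bs) (Od i)) = (if Bg i \<in> set bs then remove1 (Bg i) bs else bs)"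
  "snd (red_step (os, bs) Fl) = tl bs"
  by (auto split: list.splits)

lemma RinsI: "bs = xs @ ys \<Longrightarrow> bs' = xs @ x # ys \<Longrightarrow> Rins bs bs'"
  unfolding Rins_def by blast

lemma Rins_step: "Rins bs bs' \<Longrightarrow> Rins (snd (red_step (os, bs) s)) (snd (red_step (os', bs') s))"
proof (cases "bs' = bs")
  case True then show ?thesis by (cases s) (simp_all add: Rins_def snd_red_step del: red_step.simps)
next
  case False
  assume "Rins bs bs'"
  then obtain xs ys x where e: "bs = xs @ ys" "bs' = xs @ x # ys" using False by (auto simp: Rins_def)
  show ?thesis
  proof (cases s)
    case (Bg i)
    show ?thesis unfolding Bg snd_red_step by (rule RinsI[where xs="Bg i # xs" and ys=ys]) (simp_all add: e)
  next
    case (Od i)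
    show ?thesis
    proof (cases "Bg i \<in> set xs")
      case True
      show ?thesis unfolding Od snd_red_step
        by (rule RinsI[where xs="remove1 (Bg i) xs" and ys=ys and x=x]) (simp_all add: e True remove1_append)
    next
      case nx: False
      show ?thesis
      proof (cases "x = Bg i")
        case xi: True
        show ?thesis
        proof (cases "Bg i \<in> set ys")
          case True
          then obtain ys1 ys2 where y: "ys = ys1 @ Bg i # ys2" "Bg i \<notin> set ys1"
            by (meson split_list_first)
          have r: "remove1 (Bg i) ys = ys1 @ ys2" using y by (simp add: remove1_append)
          show ?thesis unfolding Od snd_red_step
            by (rule RinsI[where xs="xs @ ys1" and ys=ys2 and x="Bg i"]) (simp_all add: e nx xi y remove1_append)
        next
          case False
          show ?thesis unfolding Od snd_red_step using nx False xi e by (simp add: Rins_def remove1_append)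
        qed
      next
        case xn: False
        show ?thesis
        proof (cases "Bg i \<in> set ys")
          case True
          show ?thesis unfolding Od snd_red_step
            by (rule RinsI[where xs=xs and ys="remove1 (Bg i) ys" and x=x]) (use xn in \<open>simp_all add: e nx True remove1_append eq_commute[of "Bg i"]\<close>)
        next
          case False
          show ?thesis unfolding Od snd_red_step
            by (rule RinsI[where xs=xs and ys=ys and x=x]) (use xn in \<open>simp_all add: e nx False eq_commute[of "Bg i"]\<close>)
        qed
      qed
    qed
  next
    case Fl
    show ?thesis
    proof (cases xs)
      case Nil
      show ?thesis
      proof (cases ys)
        case Nil then show ?thesis unfolding Fl snd_red_step using e \<open>xs = []\<close> by (simp add: Rins_def)
      next
        case (Cons y t)
        show ?thesis unfolding Fl snd_red_step
          by (rule RinsI[where xs="[]" and ys=t and x=y]) (simp_all add: e Cons \<open>xs = []\<close>)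
      qed
    next
      case (Cons a xs')
      show ?thesis unfolding Fl snd_red_step
        by (rule RinsI[where xs=xs' and ys=ys and x=x]) (simp_all add: e Cons)
    qed
  qed
qed

lemma Rins_fold: "Rins bs bs' \<Longrightarrow> Rins (snd (foldl red_step (os, bs) w)) (snd (foldl red_step (os', bs') w))"
proof (induction w arbitrary: os bs os' bs')
  case Nil then show ?case by simp
next
  case (Cons s w)
  have "Rins (snd (red_step (os, bs) s)) (snd (red_step (os', bs') s))" by (rule Rins_step[OF Cons.prems])
  then show ?case using Cons.IH
    by (simp) (metis prod.collapse)
qed

lemma Rins_len: "Rins bs bs' \<Longrightarrow> length bs' \<le> length bs + 1"
  by (auto simp: Rins_def)

lemma nb_cons: "num_burgers (reduce (s # w)) \<le> num_burgers (reduce w) + 1"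
proof -
  have "Rins [] (snd (red_step ([],[]) s))"
    by (cases s) (auto simp: Rins_def)
  from Rins_fold[OF this, of "[]" w "fst (red_step ([],[]) s)"]
  have "Rins (snd (foldl red_step ([], []) w)) (snd (foldl red_step (red_step ([], []) s) w))"
    by simp
  then show ?thesis using Rins_len by (simp add: reduce_props)
qed

lemma len_reduce_pos: "num_burgers (reduce w) = 1 \<Longrightarrow> length (reduce w) \<ge> 1"
  using len_nb_no[of "reduce w"] by simp

lemma Cnt_reduce_J: "num_burgers (reduce w) = 1 \<Longrightarrow> Cnt (reduce w) = 2 - int (length (reduce w))"
  using len_nb_no[of "reduce w"] by (simp add: Cnt_def)


instance sym :: countable by countable_datatype

definition pref :: "(nat \<Rightarrow> sym) \<Rightarrow> nat \<Rightarrow> sym list" where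
  "pref \<omega> n = map \<omega> [0..<n]"

primrec Lp :: "nat \<Rightarrow> real \<Rightarrow> nat \<Rightarrow> sym list pmf" where
  "Lp k p 0 = return_pmf []"
| "Lp k p (Suc n) = bind_pmf (Lp k p n) (\<lambda>ys. map_pmf (\<lambda>x. ys @ [x]) (sym_pmf k p))"

definition SA :: "nat \<Rightarrow> sym set" where
  "SA k = Bg ` {..<k} \<union> Od ` {..<k} \<union> {Fl}"

lemma finite_SA[simp]: "finite (SA k)" by (simp add: SA_def)

lemma sum_SA: "(\<Sum>a\<in>SA k. g a) = (\<Sum>i<k. g (Bg i)) + (\<Sum>i<k. g (Od i)) + g Fl"
proof -
  have d1: "Bg ` {..<k} \<inter> Od ` {..<k} = {}" by auto
  have d2: "(Bg ` {..<k} \<union> Od ` {..<k}) \<inter> {Fl} = {}" by auto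
  have "(\<Sum>a\<in>SA k. g a) = (\<Sum>a\<in>(Bg ` {..<k} \<union> Od ` {..<k}) \<union> {Fl}. g a)"
    by (simp add: SA_def)
  also have "\<dots> = (\<Sum>a\<in>Bg ` {..<k} \<union> Od ` {..<k}. g a) + (\<Sum>a\<in>{Fl}. g a)"
    by (rule sum.union_disjoint) (simp_all add: d2)
  also have "(\<Sum>a\<in>Bg ` {..<k} \<union> Od ` {..<k}. g a) = (\<Sum>a\<in>Bg ` {..<k}. g a) + (\<Sum>a\<in>Od ` {..<k}. g a)"
    by (rule sum.union_disjoint) (simp_all add: d1)
  also have "(\<Sum>a\<in>Bg ` {..<k}. g a) = (\<Sum>i<k. g (Bg i))" by (rule sum.reindex_cong[where l=Bg]) (auto simp: inj_on_def)
  also have "(\<Sum>a\<in>Od ` {..<k}. g a) = (\<Sum>i<k. g (Od i))" by (rule sum.reindex_cong[where l=Od]) (auto simp: inj_on_def)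
  finally show ?thesis by simp
qed

context
  fixes k :: nat and p :: real
  assumes kp: "2 \<le> k" "0 \<le> p" "p \<le> 1"
begin

lemma weight_nonneg: "0 \<le> sym_weight k p x"
  using kp by (auto simp: sym_weight_def split: sym.splits)

lemma weight_out: "x \<notin> SA k \<Longrightarrow> sym_weight k p x = 0"
  by (cases x) (auto simp: sym_weight_def SA_def image_iff)

lemma kpos: "real k > 0" using kp by simp

lemma sum_Bg: "(\<Sum>i<k. sym_weight k p (Bg i) * c) = c / 2"
proof -
  have "(\<Sum>i<k. sym_weight k p (Bg i) * c) = (\<Sum>i<k. c / (2 * real k))"
    by (rule sum.cong) (auto simp: sym_weight_def)
  also have "\<dots> = c / 2" using kpos by simp
  finally show ?thesis .
qed

lemma sum_Od: "(\<Sum>i<k. sym_weight k p (Od i) * c) = c * (1 - p) / 2"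
proof -
  have "(\<Sum>i<k. sym_weight k p (Od i) * c) = (\<Sum>i<k. c * (1 - p) / (2 * real k))"
    by (rule sum.cong) (auto simp: sym_weight_def)
  also have "\<dots> = c * (1 - p) / 2" using kpos by simp
  finally show ?thesis .
qed

lemma w_Fl: "sym_weight k p Fl = p / 2" by (simp add: sym_weight_def)

lemma weight_sum: "(\<Sum>a\<in>SA k. sym_weight k p a) = 1"
  using sum_Bg[of 1] sum_Od[of 1] by (simp add: sum_SA w_Fl field_simps)

lemma pmf_mu: "pmf (sym_pmf k p) x = sym_weight k p x"
proof -
  have "(\<integral>\<^sup>+x. ennreal (sym_weight k p x) \<partial>count_space UNIV) = (\<Sum>x\<in>SA k. ennreal (sym_weight k p x))"
    by (rule nn_integral_count_space') (auto simp: weight_out)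
  also have "\<dots> = ennreal (\<Sum>x\<in>SA k. sym_weight k p x)"
    by (rule sum_ennreal) (simp add: weight_nonneg)
  also have "\<dots> = 1" by (simp add: weight_sum)
  finally have "(\<integral>\<^sup>+x. ennreal (sym_weight k p x) \<partial>count_space UNIV) = 1" .
  then show ?thesis unfolding sym_pmf_def
    by (subst pmf_embed_pmf) (auto simp: weight_nonneg)
qed

lemma set_mu: "set_pmf (sym_pmf k p) \<subseteq> SA k"
proof
  fix x assume "x \<in> set_pmf (sym_pmf k p)"
  then have "pmf (sym_pmf k p) x \<noteq> 0" by (simp add: set_pmf_iff)
  then show "x \<in> SA k" by (metis pmf_mu weight_out)
qed

lemma finite_set_mu: "finite (set_pmf (sym_pmf k p))"
  by (rule finite_subset[OF set_mu]) simp

lemma int_mu: "measure_pmf.expectation (sym_pmf k p) (g :: sym \<Rightarrow> real) =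
   (\<Sum>a\<in>SA k. g a * sym_weight k p a)"
proof -
  have "measure_pmf.expectation (sym_pmf k p) g = (\<Sum>a\<in>SA k. g a * pmf (sym_pmf k p) a)"
    by (rule integral_measure_pmf_real) (use set_mu in auto)
  then show ?thesis by (simp add: pmf_mu)
qed

lemma E_xi: "measure_pmf.expectation (sym_pmf k p) (\<lambda>x. real_of_int (xi x)) = 0"
proof -
  have "(\<Sum>i<k. real_of_int (xi (Bg i)) * sym_weight k p (Bg i)) = (\<Sum>i<k. sym_weight k p (Bg i) * 1)"
    by (simp add: xi_def)
  moreover have "(\<Sum>i<k. real_of_int (xi (Od i)) * sym_weight k p (Od i)) = (\<Sum>i<k. sym_weight k p (Od i) * (-1))"
    by (simp add: xi_def)
  ultimately show ?thesis
    using sum_Bg[of 1] sum_Od[of "-1"] by (simp add: int_mu sum_SA w_Fl xi_def field_simps)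
qed

lemma E_xi2: "measure_pmf.expectation (sym_pmf k p) (\<lambda>x. (real_of_int (xi x))^2) = 1"
proof -
  have "(\<lambda>x. (real_of_int (xi x))^2) = (\<lambda>x. 1)" by (auto simp: xi_def)
  then show ?thesis by simp
qed

end


lemma int_bind_fin:
  fixes f :: "'b \<Rightarrow> real"
  assumes hM: "finite (set_pmf M)" and hN: "\<And>x. x \<in> set_pmf M \<Longrightarrow> finite (set_pmf (N x))"
  shows "measure_pmf.expectation (bind_pmf M N) f =
         measure_pmf.expectation M (\<lambda>x. measure_pmf.expectation (N x) f)"
proof -
  define A where "A = (\<Union>x\<in>set_pmf M. set_pmf (N x))"
  have A: "finite A" unfolding A_def using hM hN by (intro finite_UN_I) auto
  have "measure_pmf.expectation (bind_pmf M N) f = (\<Sum>a\<in>A. f a * pmf (bind_pmf M N) a)"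
    by (rule integral_measure_pmf_real) (fact A, auto simp: A_def)
  also have "\<dots> = (\<Sum>a\<in>A. f a * (\<Sum>x\<in>set_pmf M. pmf (N x) a * pmf M x))"
  proof (rule sum.cong[OF refl])
    fix a
    have "pmf (bind_pmf M N) a = (\<Sum>x\<in>set_pmf M. pmf (N x) a * pmf M x)"
      unfolding pmf_bind by (rule integral_measure_pmf_real) (auto simp: hM)
    then show "f a * pmf (bind_pmf M N) a = f a * (\<Sum>x\<in>set_pmf M. pmf (N x) a * pmf M x)" by simp
  qed
  also have "\<dots> = (\<Sum>x\<in>set_pmf M. (\<Sum>a\<in>A. f a * pmf (N x) a) * pmf M x)"
    by (simp add: sum_distrib_left sum_distrib_right mult.assoc mult.left_commute) (rule sum.swap)
  also have "\<dots> = (\<Sum>x\<in>set_pmf M. measure_pmf.expectation (N x) f * pmf M x)"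
  proof (rule sum.cong[OF refl])
    fix x assume x: "x \<in> set_pmf M"
    have "measure_pmf.expectation (N x) f = (\<Sum>a\<in>A. f a * pmf (N x) a)"
      by (rule integral_measure_pmf_real) (fact A, use x in \<open>auto simp: A_def\<close>)
    then show "(\<Sum>a\<in>A. f a * pmf (N x) a) * pmf M x = measure_pmf.expectation (N x) f * pmf M x" by simp
  qed
  also have "\<dots> = measure_pmf.expectation M (\<lambda>x. measure_pmf.expectation (N x) f)"
    by (rule integral_measure_pmf_real[symmetric]) (auto simp: hM)
  finally show ?thesis .
qed

context
  fixes k :: nat and p :: real
  assumes kp: "2 \<le> k" "0 \<le> p" "p \<le> 1"
begin

lemma finite_Lp: "finite (set_pmf (Lp k p n))"
  by (induction n) (auto simp: finite_set_mu[OF kp])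

lemma int_Lp_Suc:
  fixes F :: "sym list \<Rightarrow> real"
  shows "measure_pmf.expectation (Lp k p (Suc n)) F =
    measure_pmf.expectation (Lp k p n) (\<lambda>ys. measure_pmf.expectation (sym_pmf k p) (\<lambda>x. F (ys @ [x])))"
  by (simp add: int_bind_fin finite_Lp finite_set_mu[OF kp])

lemma int_Lp_0: "measure_pmf.expectation (Lp k p 0) (F :: sym list \<Rightarrow> real) = F []" by (simp add: expectation_return_pmf)

lemma pmf_Lp: "pmf (Lp k p n) ys = (if length ys = n then (\<Prod>i<n. pmf (sym_pmf k p) (ys ! i)) else 0)"
proof (induction n arbitrary: ys)
  case 0 then show ?case by (auto simp: pmf_return)
next
  case (Suc n)
  have "pmf (Lp k p (Suc n)) ys = measure_pmf.expectation (Lp k p n)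
          (\<lambda>zs. pmf (map_pmf (\<lambda>x. zs @ [x]) (sym_pmf k p)) ys)"
    by (simp add: pmf_bind)
  also have "\<dots> = measure_pmf.expectation (Lp k p n)
          (\<lambda>zs. indicator {butlast ys} zs * (if ys = [] then 0 else pmf (sym_pmf k p) (last ys)))"
  proof (rule Bochner_Integration.integral_cong[OF refl])
    fix zs
    show "pmf (map_pmf (\<lambda>x. zs @ [x]) (sym_pmf k p)) ys =
      indicator {butlast ys} zs * (if ys = [] then 0 else pmf (sym_pmf k p) (last ys))"
    proof (cases "ys \<noteq> [] \<and> zs = butlast ys")
      case True
      then have e: "ys = zs @ [last ys]" by simp
      show ?thesis using True by (subst (1) e, subst pmf_map_inj') (auto simp: inj_def)
    next
      case False
      then have "ys \<notin> set_pmf (map_pmf (\<lambda>x. zs @ [x]) (sym_pmf k p))" by auto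
      then have "pmf (map_pmf (\<lambda>x. zs @ [x]) (sym_pmf k p)) ys = 0" by (metis set_pmf_iff)
      then show ?thesis using False by auto
    qed
  qed
  also have "\<dots> = pmf (Lp k p n) (butlast ys) * (if ys = [] then 0 else pmf (sym_pmf k p) (last ys))"
    by (simp add: measure_pmf_single)
  also have "\<dots> = (if length ys = Suc n then (\<Prod>i<Suc n. pmf (sym_pmf k p) (ys ! i)) else 0)"
  proof (cases "ys = []")
    case True then show ?thesis by simp
  next
    case False
    then obtain zs x where e: "ys = zs @ [x]" by (metis append_butlast_last_id)
    have "(\<Prod>i<Suc n. pmf (sym_pmf k p) ((zs @ [x]) ! i)) = (\<Prod>i<n. pmf (sym_pmf k p) (zs ! i)) * pmf (sym_pmf k p) x"
      if "length zs = n" using that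
      by (simp add: prod.lessThan_Suc nth_append)
    then show ?thesis using Suc.IH[of zs] by (simp add: e)
  qed
  finally show ?case .
qed

lemma space_X[simp]: "space (Xspace k p) = UNIV"
  by (simp add: Xspace_def space_PiM)

lemma sets_X_emb: "prod_emb UNIV (\<lambda>_. measure_pmf (sym_pmf k p)) {..<n} (PiE {..<n} (\<lambda>i. {ys ! i})) \<in> sets (Xspace k p)"
  unfolding Xspace_def by (rule sets_PiM_I) auto

lemma pref_pre: "length ys = n \<Longrightarrow>
  {\<omega>. pref \<omega> n = ys} = prod_emb UNIV (\<lambda>_. measure_pmf (sym_pmf k p)) {..<n} (PiE {..<n} (\<lambda>i. {ys ! i}))"
proof (intro set_eqI)
  assume len: "length ys = n"
  fix \<omega> :: "nat \<Rightarrow> sym"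
  have 1: "\<omega> \<in> prod_emb UNIV (\<lambda>_. measure_pmf (sym_pmf k p)) {..<n} (PiE {..<n} (\<lambda>i. {ys ! i})) \<longleftrightarrow>
      (\<forall>i\<in>{..<n}. \<omega> i \<in> {ys ! i})"
    by (simp add: prod_emb_def space_PiM restrict_PiE_iff Pi_iff)
  have 2: "pref \<omega> n = ys \<longleftrightarrow> (\<forall>i<n. \<omega> i = ys ! i)"
    unfolding pref_def list_eq_iff_nth_eq using len by simp
  show "\<omega> \<in> {\<omega>. pref \<omega> n = ys} \<longleftrightarrow> \<omega> \<in> prod_emb UNIV (\<lambda>_. measure_pmf (sym_pmf k p)) {..<n} (PiE {..<n} (\<lambda>i. {ys ! i}))"
    unfolding 1 Ball_def lessThan_iff using 2 by simp
qed

lemma meas_pref: "(\<lambda>\<omega>. pref \<omega> n) \<in> measurable (Xspace k p) (count_space UNIV)"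
proof (subst measurable_count_space_eq_countable, simp, intro conjI ballI)
  fix ys :: "sym list"
  show "(\<lambda>\<omega>. pref \<omega> n) -` {ys} \<inter> space (Xspace k p) \<in> sets (Xspace k p)"
  proof (cases "length ys = n")
    case True
    then have "(\<lambda>\<omega>. pref \<omega> n) -` {ys} \<inter> space (Xspace k p) = {\<omega>. pref \<omega> n = ys}" by auto
    then show ?thesis using pref_pre[OF True] sets_X_emb by simp
  next
    case False
    then have "(\<lambda>\<omega>. pref \<omega> n) -` {ys} \<inter> space (Xspace k p) = {}" by (auto simp: pref_def)
    then show ?thesis by simp
  qed
qed simp

lemma emeasure_pref: "emeasure (Xspace k p) {\<omega>. pref \<omega> n = ys} = ennreal (pmf (Lp k p n) ys)"
proof (cases "length ys = n")
  case True
  have "emeasure (Xspace k p) {\<omega>. pref \<omega> n = ys} =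
      (\<Prod>i<n. emeasure (measure_pmf (sym_pmf k p)) {ys ! i})"
    unfolding pref_pre[OF True] Xspace_def
    by (rule emeasure_PiM_emb) (auto simp: prob_space_measure_pmf)
  also have "\<dots> = (\<Prod>i<n. ennreal (pmf (sym_pmf k p) (ys ! i)))"
    by (simp add: emeasure_pmf_single)
  also have "\<dots> = ennreal (\<Prod>i<n. pmf (sym_pmf k p) (ys ! i))"
    by (simp add: prod_ennreal)
  finally show ?thesis using True by (simp add: pmf_Lp)
next
  case False
  then have "{\<omega>. pref \<omega> n = ys} = {}" by (auto simp: pref_def)
  then show ?thesis using False by (simp add: pmf_Lp)
qed

lemma distr_pref: "distr (Xspace k p) (count_space UNIV) (\<lambda>\<omega>. pref \<omega> n) = measure_pmf (Lp k p n)"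
proof (rule measure_eqI_countable[where A=UNIV])
  fix ys :: "sym list"
  have "(\<lambda>\<omega>. pref \<omega> n) -` {ys} \<inter> space (Xspace k p) = {\<omega>. pref \<omega> n = ys}" by auto
  then show "emeasure (distr (Xspace k p) (count_space UNIV) (\<lambda>\<omega>. pref \<omega> n)) {ys} = emeasure (measure_pmf (Lp k p n)) {ys}"
    by (simp add: emeasure_distr meas_pref emeasure_pref emeasure_pmf_single)
qed simp_all

lemma int_pref: "(\<integral>\<omega>. F (pref \<omega> n) \<partial>Xspace k p) = measure_pmf.expectation (Lp k p n) (F :: sym list \<Rightarrow> real)"
  by (subst distr_pref[symmetric]) (simp add: integral_distr meas_pref)

lemma nn_pref: "(\<integral>\<^sup>+\<omega>. F (pref \<omega> n) \<partial>Xspace k p) = (\<integral>\<^sup>+ys. F ys \<partial>measure_pmf (Lp k p n))"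
  by (subst distr_pref[symmetric]) (simp add: nn_integral_distr meas_pref)

end


definition st :: "(sym list \<Rightarrow> bool) \<Rightarrow> sym list \<Rightarrow> bool" where
  "st Q ys = (\<exists>m\<le>length ys. Q (take m ys))"

definition tau :: "(sym list \<Rightarrow> bool) \<Rightarrow> sym list \<Rightarrow> nat" where
  "tau Q ys = (LEAST m. Q (take m ys))"

definition Stp :: "(sym list \<Rightarrow> bool) \<Rightarrow> (sym list \<Rightarrow> int) \<Rightarrow> sym list \<Rightarrow> int" where
  "Stp Q V ys = (if st Q ys then V (take (tau Q ys) ys) else V ys)"

lemma st_snoc: "st Q (ys @ [x]) \<longleftrightarrow> st Q ys \<or> Q (ys @ [x])"
proof
  assume "st Q (ys @ [x])"
  then obtain m where m: "m \<le> length ys + 1" "Q (take m (ys @ [x]))" by (auto simp: st_def)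
  show "st Q ys \<or> Q (ys @ [x])"
  proof (cases "m \<le> length ys")
    case True then show ?thesis using m by (auto simp: st_def)
  next
    case False then have "m = length ys + 1" using m by simp
    then show ?thesis using m by simp
  qed
next
  assume "st Q ys \<or> Q (ys @ [x])"
  then show "st Q (ys @ [x])"
  proof
    assume "st Q ys"
    then obtain m where "m \<le> length ys" "Q (take m ys)" by (auto simp: st_def)
    then show ?thesis unfolding st_def by (intro exI[of _ m]) simp
  next
    assume "Q (ys @ [x])"
    then show ?thesis unfolding st_def by (intro exI[of _ "length ys + 1"]) simp
  qed
qed

lemma st_Nil: "st Q [] \<longleftrightarrow> Q []" by (simp add: st_def)

lemma tau_props: assumes "st Q ys" shows "tau Q ys \<le> length ys" "Q (take (tau Q ys) ys)"
proof -
  obtain m where m: "m \<le> length ys" "Q (take m ys)" using assms by (auto simp: st_def)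
  show "Q (take (tau Q ys) ys)" unfolding tau_def by (rule LeastI[of _ m]) (rule m(2))
  have "tau Q ys \<le> m" unfolding tau_def by (rule Least_le) (rule m(2))
  then show "tau Q ys \<le> length ys" using m by simp
qed

lemma tau_snoc: assumes "st Q ys" shows "tau Q (ys @ [x]) = tau Q ys"
proof -
  have t: "tau Q ys \<le> length ys" "Q (take (tau Q ys) ys)" using tau_props[OF assms] by auto
  show ?thesis unfolding tau_def[of Q "ys @ [x]"]
  proof (rule Least_equality)
    show "Q (take (tau Q ys) (ys @ [x]))" using t by simp
  next
    fix y assume "Q (take y (ys @ [x]))"
    show "tau Q ys \<le> y"
    proof (rule ccontr)
      assume "\<not> tau Q ys \<le> y"
      then have "y < tau Q ys" by simp
      then have "\<not> Q (take y ys)" unfolding tau_def by (rule not_less_Least)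
      moreover have "take y (ys @ [x]) = take y ys" using \<open>y < tau Q ys\<close> t by simp
      ultimately show False using \<open>Q (take y (ys @ [x]))\<close> by simp
    qed
  qed
qed

lemma tau_snoc2: assumes "\<not> st Q ys" "Q (ys @ [x])" shows "tau Q (ys @ [x]) = length ys + 1"
  unfolding tau_def
proof (rule Least_equality)
  show "Q (take (length ys + 1) (ys @ [x]))" using assms by simp
next
  fix y assume y: "Q (take y (ys @ [x]))"
  show "length ys + 1 \<le> y"
  proof (rule ccontr)
    assume "\<not> length ys + 1 \<le> y"
    then have "y \<le> length ys" by simp
    then have "take y (ys @ [x]) = take y ys" by simp
    then have "st Q ys" using y \<open>y \<le> length ys\<close> by (auto simp: st_def)
    then show False using assms by simp
  qed
qed

lemma Stp_Nil: "Stp Q V [] = V []" by (simp add: Stp_def)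

lemma Stp_snoc:
  assumes V: "\<And>ys x. V (ys @ [x]) = V ys + xi x"
  shows "Stp Q V (ys @ [x]) = Stp Q V ys + (if st Q ys then 0 else xi x)"
proof (cases "st Q ys")
  case True
  have "tau Q ys \<le> length ys" using tau_props[OF True] by simp
  then show ?thesis using True by (simp add: Stp_def st_snoc tau_snoc)
next
  case False
  show ?thesis
  proof (cases "Q (ys @ [x])")
    case True
    then show ?thesis using False by (simp add: Stp_def st_snoc tau_snoc2 V)
  next
    case F2: False
    then show ?thesis using False by (simp add: Stp_def st_snoc V)
  qed
qed

context
  fixes k :: nat and p :: real
  assumes kp: "2 \<le> k" "0 \<le> p" "p \<le> 1"
begin

lemma integrable_mu[simp]: "integrable (measure_pmf (sym_pmf k p)) (f :: sym \<Rightarrow> real)"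
  by (rule integrable_measure_pmf_finite) (rule finite_set_mu[OF kp])

lemma integrable_Lp[simp]: "integrable (measure_pmf (Lp k p n)) (f :: sym list \<Rightarrow> real)"
  by (rule integrable_measure_pmf_finite) (rule finite_Lp[OF kp])

lemma E_lin: "measure_pmf.expectation (sym_pmf k p) (\<lambda>x. a + b * real_of_int (xi x)) = a"
  using E_xi[OF kp] by simp

lemma E_sq: "measure_pmf.expectation (sym_pmf k p) (\<lambda>x. (a + b * real_of_int (xi x))^2) = a^2 + b^2"
proof -
  have "(\<lambda>x. (a + b * real_of_int (xi x))^2) = (\<lambda>x. (a^2 + b^2) + (2 * a * b) * real_of_int (xi x))"
    by (rule ext) (simp add: xi_def power2_eq_square algebra_simps)
  then show ?thesis using E_lin by simp
qed

lemma E_Stp: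
  assumes V: "\<And>ys x. V (ys @ [x]) = V ys + xi x"
  shows "measure_pmf.expectation (Lp k p n) (\<lambda>ys. real_of_int (Stp Q V ys)) = real_of_int (V [])"
proof (induction n)
  case 0 then show ?case by (simp add: int_Lp_0[OF kp] Stp_Nil)
next
  case (Suc n)
  have "measure_pmf.expectation (Lp k p (Suc n)) (\<lambda>ys. real_of_int (Stp Q V ys)) =
    measure_pmf.expectation (Lp k p n) (\<lambda>ys. measure_pmf.expectation (sym_pmf k p)
      (\<lambda>x. real_of_int (Stp Q V ys) + (if st Q ys then 0 else 1) * real_of_int (xi x)))"
    by (subst int_Lp_Suc[OF kp], intro Bochner_Integration.integral_cong refl) (simp add: Stp_snoc[OF V])
  also have "\<dots> = measure_pmf.expectation (Lp k p n) (\<lambda>ys. real_of_int (Stp Q V ys))"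
    by (simp only: E_lin)
  finally show ?case using Suc by simp
qed

definition ust :: "(sym list \<Rightarrow> bool) \<Rightarrow> nat \<Rightarrow> real" where
  "ust Q n = measure_pmf.expectation (Lp k p n) (\<lambda>ys. if st Q ys then 0 else 1)"

lemma E_Stp2:
  assumes V: "\<And>ys x. V (ys @ [x]) = V ys + xi x"
  shows "measure_pmf.expectation (Lp k p n) (\<lambda>ys. (real_of_int (Stp Q V ys))^2) = (real_of_int (V []))^2 + (\<Sum>m<n. ust Q m)"
proof (induction n)
  case 0 then show ?case by (simp add: int_Lp_0[OF kp] Stp_Nil)
next
  case (Suc n)
  have "measure_pmf.expectation (Lp k p (Suc n)) (\<lambda>ys. (real_of_int (Stp Q V ys))^2) =
    measure_pmf.expectation (Lp k p n) (\<lambda>ys. measure_pmf.expectation (sym_pmf k p)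
      (\<lambda>x. (real_of_int (Stp Q V ys) + (if st Q ys then 0 else 1) * real_of_int (xi x))^2))"
    by (subst int_Lp_Suc[OF kp], intro Bochner_Integration.integral_cong refl) (simp add: Stp_snoc[OF V])
  also have "\<dots> = measure_pmf.expectation (Lp k p n) (\<lambda>ys. (real_of_int (Stp Q V ys))^2 + (if st Q ys then 0 else 1))"
    by (simp only: E_sq) (intro Bochner_Integration.integral_cong refl, simp)
  also have "\<dots> = measure_pmf.expectation (Lp k p n) (\<lambda>ys. (real_of_int (Stp Q V ys))^2) + ust Q n"
    unfolding ust_def by (rule Bochner_Integration.integral_add) simp_all
  finally show ?case using Suc by simp
qed

lemma ust_mono: "ust Q (Suc n) \<le> ust Q n"
proof -
  have "ust Q (Suc n) = measure_pmf.expectation (Lp k p n) (\<lambda>ys. measure_pmf.expectation (sym_pmf k p)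
      (\<lambda>x. if st Q (ys @ [x]) then 0 else 1))"
    unfolding ust_def by (rule int_Lp_Suc[OF kp])
  also have "\<dots> \<le> measure_pmf.expectation (Lp k p n) (\<lambda>ys. measure_pmf.expectation (sym_pmf k p)
      (\<lambda>x. if st Q ys then 0 else 1))"
    by (intro integral_mono integral_mono) (auto simp: st_snoc)
  also have "\<dots> = ust Q n" unfolding ust_def by simp
  finally show ?thesis .
qed

lemma ust_anti: "m \<le> n \<Longrightarrow> ust Q n \<le> ust Q m"
  by (induction n rule: dec_induct) (auto intro: order_trans[OF ust_mono])

lemma ust_bound:
  assumes V: "\<And>ys x. V (ys @ [x]) = V ys + xi x" and B: "\<And>ys. (real_of_int (Stp Q V ys))^2 \<le> B"
    and V0: "V [] = 0"
  shows "real n * ust Q n \<le> B"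
proof -
  have "real n * ust Q n = (\<Sum>m<n. ust Q n)" by simp
  also have "\<dots> \<le> (\<Sum>m<n. ust Q m)" by (intro sum_mono ust_anti) simp
  also have "\<dots> = measure_pmf.expectation (Lp k p n) (\<lambda>ys. (real_of_int (Stp Q V ys))^2)"
    using E_Stp2[OF V, of n Q] V0 by simp
  also have "\<dots> \<le> measure_pmf.expectation (Lp k p n) (\<lambda>ys. B)"
    by (rule integral_mono) (auto intro: B)
  also have "\<dots> = B" by simp
  finally show ?thesis .
qed

end


definition QJ :: "sym list \<Rightarrow> bool" where
  "QJ zs = (zs \<noteq> [] \<and> num_burgers (reduce (rev zs)) = 1)"
definition VJ :: "sym list \<Rightarrow> int" where
  "VJ zs = Cnt (reduce (rev zs))"
definition QS :: "nat \<Rightarrow> sym list \<Rightarrow> bool" where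
  "QS M zs = (Cnt zs = 1 \<or> Cnt zs = - int M)"
definition Aev :: "sym list \<Rightarrow> bool" where
  "Aev ys = (\<exists>m\<le>length ys. Cnt (take m ys) = 1)"

lemma VJ_snoc: "VJ (ys @ [x]) = VJ ys + xi x"
  by (simp add: VJ_def reduce_props(3))

lemma VJ_Nil: "VJ [] = 0" by (simp add: VJ_def reduce_props(3))

lemma Cnt_snoc: "Cnt (ys @ [x]) = Cnt ys + xi x" by simp

lemma reduce_Nil: "reduce [] = []" by (simp add: reduce_def)

lemma nb0: "\<not> st QJ ys \<Longrightarrow> num_burgers (reduce (rev ys)) = 0"
proof (induction ys rule: rev_induct)
  case Nil then show ?case by (simp add: reduce_Nil)
next
  case (snoc x ys)
  then have "\<not> st QJ ys" "\<not> QJ (ys @ [x])" by (auto simp: st_snoc)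
  then have "num_burgers (reduce (rev ys)) = 0" using snoc.IH by simp
  moreover have "num_burgers (reduce (x # rev ys)) \<le> num_burgers (reduce (rev ys)) + 1" by (rule nb_cons)
  moreover have "num_burgers (reduce (x # rev ys)) \<noteq> 1" using \<open>\<not> QJ (ys @ [x])\<close> by (simp add: QJ_def)
  ultimately show ?case by simp
qed

lemma nb_pos_st: "num_burgers (reduce (rev zs)) \<ge> 1 \<Longrightarrow> st QJ zs"
proof (induction zs rule: rev_induct)
  case Nil then show ?case by (simp add: reduce_Nil)
next
  case (snoc x ys)
  show ?case
  proof (cases "st QJ ys")
    case True then show ?thesis by (simp add: st_snoc)
  next
    case False
    then have "num_burgers (reduce (rev ys)) = 0" by (rule nb0)
    moreover have "num_burgers (reduce (x # rev ys)) \<le> num_burgers (reduce (rev ys)) + 1" by (rule nb_cons)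
    ultimately have "QJ (ys @ [x])" using snoc.prems by (simp add: QJ_def)
    then show ?thesis by (simp add: st_snoc)
  qed
qed

lemma st_take: "st Q (take m ys) \<Longrightarrow> st Q ys"
proof -
  assume "st Q (take m ys)"
  then obtain m' where m': "m' \<le> length (take m ys)" "Q (take m' (take m ys))" by (auto simp: st_def)
  have "take m' (take m ys) = take m' ys" using m'(1) by (auto simp: min_def split: if_splits)
  then show ?thesis using m' unfolding st_def by (intro exI[of _ m']) auto
qed

lemma Aev_stJ: "Aev ys \<Longrightarrow> st QJ ys"
proof -
  assume "Aev ys"
  then obtain m where m: "Cnt (take m ys) = 1" by (auto simp: Aev_def)
  then have "Cnt (reduce (rev (take m ys))) = 1" by (simp add: reduce_props(3))
  then have "num_burgers (reduce (rev (take m ys))) \<ge> 1" by (simp add: Cnt_def)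
  then have "st QJ (take m ys)" by (rule nb_pos_st)
  then show ?thesis by (rule st_take)
qed

lemma Aev_stS: "Aev ys \<Longrightarrow> st (QS M) ys"
  by (auto simp: Aev_def st_def QS_def)

lemma xi_cases: "xi x = 1 \<or> xi x = -1" by (simp add: xi_def)

lemma noS_bounds: "M \<ge> 1 \<Longrightarrow> \<not> st (QS M) ys \<Longrightarrow> - int M < Cnt ys \<and> Cnt ys < 1"
proof (induction ys rule: rev_induct)
  case Nil then show ?case by simp
next
  case (snoc x ys)
  then have "\<not> st (QS M) ys" "\<not> QS M (ys @ [x])" by (auto simp: st_snoc)
  then have "- int M < Cnt ys \<and> Cnt ys < 1" using snoc by simp
  then show ?case using \<open>\<not> QS M (ys @ [x])\<close> xi_cases[of x] by (auto simp: QS_def)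
qed

lemma StpS_vals: "M \<ge> 1 \<Longrightarrow> st (QS M) ys \<Longrightarrow> Stp (QS M) Cnt ys = 1 \<or> Stp (QS M) Cnt ys = - int M"
  using tau_props(2)[of "QS M" ys] by (simp add: Stp_def QS_def)

lemma StpS_sq: "M \<ge> 1 \<Longrightarrow> (real_of_int (Stp (QS M) Cnt ys))^2 \<le> (real M)^2"
proof (cases "st (QS M) ys")
  case True
  assume "M \<ge> 1"
  then show ?thesis using StpS_vals[OF \<open>M \<ge> 1\<close> True] by auto
next
  case False
  assume M: "M \<ge> 1"
  have b: "- int M < Cnt ys \<and> Cnt ys < 1" by (rule noS_bounds[OF M False])
  have "Stp (QS M) Cnt ys = Cnt ys" using False by (simp add: Stp_def)
  then have "\<bar>real_of_int (Stp (QS M) Cnt ys)\<bar> \<le> real M" using b by linarith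
  from power_mono[OF this abs_ge_zero, of 2] show ?thesis by simp
qed

lemma StpS_le: "M \<ge> 1 \<Longrightarrow> real_of_int (Stp (QS M) Cnt ys) \<le>
   (real M + 1) * (if Aev ys then 1 else 0) - real M * (if st (QS M) ys then 1 else 0)"
proof (cases "st (QS M) ys")
  case True
  assume M: "M \<ge> 1"
  show ?thesis
  proof (cases "Stp (QS M) Cnt ys = 1")
    case True
    have "Aev ys" using tau_props[OF \<open>st (QS M) ys\<close>] True
      by (auto simp: Aev_def Stp_def \<open>st (QS M) ys\<close> intro!: exI[of _ "tau (QS M) ys"])
    then show ?thesis using True \<open>st (QS M) ys\<close> by simp
  next
    case False
    then have "Stp (QS M) Cnt ys = - int M" using StpS_vals[OF M \<open>st (QS M) ys\<close>] by simp
    then show ?thesis using \<open>st (QS M) ys\<close> by simp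
  qed
next
  case False
  assume M: "M \<ge> 1"
  have b: "- int M < Cnt ys \<and> Cnt ys < 1" by (rule noS_bounds[OF M False])
  have "Stp (QS M) Cnt ys = Cnt ys" using False by (simp add: Stp_def)
  moreover have "\<not> Aev ys" using False Aev_stS by blast
  ultimately show ?thesis using b False by simp
qed

definition fJ :: "sym list \<Rightarrow> real" where
  "fJ ys = (if st QJ ys then real (length (reduce (rev (take (tau QJ ys) ys)))) else 0)"
definition indJ :: "sym list \<Rightarrow> real" where
  "indJ ys = (if st QJ ys then 1 else 0)"
definition cJ :: "sym list \<Rightarrow> real" where
  "cJ ys = (if st QJ ys then 0 else real_of_int (VJ ys))"

lemma StpJ_eq: "real_of_int (Stp QJ VJ ys) = 2 * indJ ys - fJ ys + cJ ys"
proof (cases "st QJ ys")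
  case True
  have "QJ (take (tau QJ ys) ys)" by (rule tau_props(2)[OF True])
  then have "num_burgers (reduce (rev (take (tau QJ ys) ys))) = 1" by (simp add: QJ_def)
  from Cnt_reduce_J[OF this] show ?thesis using True by (simp add: Stp_def indJ_def fJ_def cJ_def VJ_def)
next
  case False then show ?thesis by (simp add: Stp_def indJ_def fJ_def cJ_def)
qed

lemma fJ_ge: "indJ ys \<le> fJ ys"
proof (cases "st QJ ys")
  case True
  have "QJ (take (tau QJ ys) ys)" by (rule tau_props(2)[OF True])
  then have "num_burgers (reduce (rev (take (tau QJ ys) ys))) = 1" by (simp add: QJ_def)
  from len_reduce_pos[OF this] show ?thesis using True by (simp add: indJ_def fJ_def)
next
  case False then show ?thesis by (simp add: indJ_def fJ_def)
qed

lemma fJ_nonneg: "0 \<le> fJ ys" by (simp add: fJ_def)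

lemma cJ_le: "cJ ys \<le> 0"
proof (cases "st QJ ys")
  case False
  then have "num_burgers (reduce (rev ys)) = 0" by (rule nb0)
  then show ?thesis using False by (simp add: cJ_def VJ_def Cnt_def)
qed (simp add: cJ_def)

lemma indJ_le: "indJ ys \<le> 1" by (simp add: indJ_def)

context
  fixes k :: nat and p :: real
  assumes kp: "2 \<le> k" "0 \<le> p" "p \<le> 1"
begin

lemma E_identity: "measure_pmf.expectation (Lp k p n) fJ =
  2 * measure_pmf.expectation (Lp k p n) indJ + measure_pmf.expectation (Lp k p n) cJ"
proof -
  have "0 = measure_pmf.expectation (Lp k p n) (\<lambda>ys. real_of_int (Stp QJ VJ ys))"
    using E_Stp[OF kp VJ_snoc, of n QJ] by (simp add: VJ_Nil)
  also have "\<dots> = measure_pmf.expectation (Lp k p n) (\<lambda>ys. 2 * indJ ys - fJ ys + cJ ys)"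
    by (simp add: StpJ_eq)
  also have "\<dots> = 2 * measure_pmf.expectation (Lp k p n) indJ - measure_pmf.expectation (Lp k p n) fJ
       + measure_pmf.expectation (Lp k p n) cJ"
    by (simp add: integrable_Lp[OF kp])
  finally show ?thesis by simp
qed

lemma q_lower:
  assumes M: "M \<ge> 1" and n: "n \<ge> 1"
  shows "real M / (real M + 1) * (1 - (real M)^2 / real n) \<le> measure_pmf.expectation (Lp k p n) indJ"
proof -
  let ?E = "measure_pmf.expectation (Lp k p n)"
  let ?A = "\<lambda>ys. if Aev ys then 1 else (0::real)"
  let ?S = "\<lambda>ys. if st (QS M) ys then 1 else (0::real)"
  have "0 = ?E (\<lambda>ys. real_of_int (Stp (QS M) Cnt ys))"
    using E_Stp[OF kp Cnt_snoc, of n "QS M"] by simp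
  also have "\<dots> \<le> ?E (\<lambda>ys. (real M + 1) * ?A ys - real M * ?S ys)"
    by (rule integral_mono, simp add: integrable_Lp[OF kp], simp add: integrable_Lp[OF kp], rule StpS_le[OF M])
  also have "\<dots> = (real M + 1) * ?E ?A - real M * ?E ?S"
    by (simp add: integrable_Lp[OF kp])
  finally have 1: "real M * ?E ?S \<le> (real M + 1) * ?E ?A" by simp
  have "?E (\<lambda>ys. ?S ys + (if st (QS M) ys then 0 else 1)) = ?E ?S + ust k p (QS M) n"
    unfolding ust_def[OF kp] by (rule Bochner_Integration.integral_add) (simp_all add: integrable_Lp[OF kp])
  moreover have "(\<lambda>ys. ?S ys + (if st (QS M) ys then 0 else 1)) = (\<lambda>ys. 1)" by auto
  ultimately have "?E ?S + ust k p (QS M) n = 1" by simp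
  then have 2: "?E ?S = 1 - ust k p (QS M) n" by simp
  have "real n * ust k p (QS M) n \<le> (real M)^2"
    by (rule ust_bound[OF kp Cnt_snoc StpS_sq[OF M]]) simp
  then have 3: "ust k p (QS M) n \<le> (real M)^2 / real n" using n by (simp add: field_simps)
  have 4: "?E ?A \<le> ?E indJ"
    by (rule integral_mono) (auto simp: integrable_Lp[OF kp] indJ_def dest: Aev_stJ)
  have "real M * (1 - (real M)^2 / real n) \<le> real M * ?E ?S"
    using 2 3 by (intro mult_left_mono) auto
  also have "\<dots> \<le> (real M + 1) * ?E ?A" by (rule 1)
  finally have "real M * (1 - (real M)^2 / real n) \<le> (real M + 1) * ?E indJ"
    using 4 by (smt (verit) mult_left_mono of_nat_0_le_iff)
  then show ?thesis by (simp add: field_simps)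
qed

end


lemma len_pref[simp]: "length (pref \<omega> n) = n" by (simp add: pref_def)

lemma take_pref: "m \<le> n \<Longrightarrow> take m (pref \<omega> n) = pref \<omega> m"
  by (simp add: pref_def take_map take_upt)

lemma Xred_pref: "Xred \<omega> m = reduce (rev (pref \<omega> m))"
  by (simp add: Xred_def Xword_def pref_def)

lemma pref_Nil: "pref \<omega> m = [] \<longleftrightarrow> m = 0" by (simp add: pref_def)

lemma QJ_pref: "m \<le> n \<Longrightarrow> QJ (take m (pref \<omega> n)) \<longleftrightarrow> (0 < m \<and> num_burgers (Xred \<omega> m) = 1)"
  by (simp add: take_pref QJ_def Xred_pref pref_Nil)

lemma aux_ineq: "0 \<le> (a::real) \<Longrightarrow> 0 \<le> b \<Longrightarrow> 1 - a - b \<le> (1 - a) * (1 - b)"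
  using mult_nonneg_nonneg[of a b] by (simp add: algebra_simps)

lemma Least_agree:
  fixes P R :: "nat \<Rightarrow> bool"
  assumes "\<And>m. m \<le> n \<Longrightarrow> P m = R m" "P w" "w \<le> n"
  shows "Least P = Least R"
proof -
  have lp: "Least P \<le> w" by (rule Least_le) (rule assms(2))
  have pl: "P (Least P)" by (rule LeastI) (rule assms(2))
  then have rl: "R (Least P)" using assms lp by simp
  have lr: "Least R \<le> Least P" by (rule Least_le) (rule rl)
  have "R (Least R)" by (rule LeastI) (rule rl)
  then have "P (Least R)" using assms lr lp by simp
  then have "Least P \<le> Least R" by (rule Least_le)
  then show ?thesis using lr by simp
qed

lemma J_st:
  assumes "st QJ (pref \<omega> n)"
  shows "Jtime \<omega> = enat (tau QJ (pref \<omega> n)) \<and> tau QJ (pref \<omega> n) \<le> n"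
proof -
  obtain m where m: "m \<le> n" "QJ (take m (pref \<omega> n))" using assms by (auto simp: st_def)
  then have pm: "0 < m \<and> num_burgers (Xred \<omega> m) = 1" using QJ_pref by blast
  then have ex: "\<exists>m>0. num_burgers (Xred \<omega> m) = 1" by blast
  have "(LEAST m. 0 < m \<and> num_burgers (Xred \<omega> m) = 1) = (LEAST m. QJ (take m (pref \<omega> n)))"
    by (rule Least_agree[where n=n and w=m]) (auto simp: QJ_pref m pm)
  then have "Jtime \<omega> = enat (tau QJ (pref \<omega> n))"
    using ex by (simp add: Jtime_def tau_def)
  moreover have "tau QJ (pref \<omega> n) \<le> n" using tau_props(1)[OF assms] by simp
  ultimately show ?thesis by simp
qed

lemma J_nst:
  assumes "\<not> st QJ (pref \<omega> n)"
  shows "enat n < Jtime \<omega>"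
proof (cases "\<exists>m>0. num_burgers (Xred \<omega> m) = 1")
  case True
  define L where "L = (LEAST m. 0 < m \<and> num_burgers (Xred \<omega> m) = 1)"
  have J: "Jtime \<omega> = enat L" using True by (simp add: Jtime_def L_def)
  have PL: "0 < L \<and> num_burgers (Xred \<omega> L) = 1" unfolding L_def using True by (rule LeastI_ex)
  have "\<not> L \<le> n"
  proof
    assume "L \<le> n"
    then have "QJ (take L (pref \<omega> n))" using PL QJ_pref by blast
    then have "st QJ (pref \<omega> n)" using \<open>L \<le> n\<close> by (auto simp: st_def)
    then show False using assms by simp
  qed
  then show ?thesis using J by simp
next
  case False then have "Jtime \<omega> = \<infinity>" unfolding Jtime_def by (rule if_not_P)
  then show ?thesis by simp
qed

lemma fJ_pref: "fJ (pref \<omega> n) = (case Jtime \<omega> of enat m \<Rightarrow> if m \<le> n then real (length (Xred \<omega> m)) else 0 | \<infinity> \<Rightarrow> 0)"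
proof (cases "st QJ (pref \<omega> n)")
  case True
  note J = J_st[OF True]
  then show ?thesis using True by (simp add: fJ_def take_pref Xred_pref)
next
  case False
  note J = J_nst[OF False]
  then show ?thesis using False by (cases "Jtime \<omega>") (auto simp: fJ_def)
qed

lemma cJ_pref: "real_of_int (Cnt (Xred \<omega> n)) * indicator {\<omega>. enat n < Jtime \<omega>} \<omega> = cJ (pref \<omega> n)"
proof (cases "st QJ (pref \<omega> n)")
  case True
  note J = J_st[OF True]
  then show ?thesis using True by (simp add: cJ_def)
next
  case False
  note J = J_nst[OF False]
  then show ?thesis using False by (simp add: cJ_def VJ_def Xred_pref)
qed

lemma indJ_pref_le: "indJ (pref \<omega> n) \<le> 1" by (rule indJ_le)

context
  fixes k :: nat and p :: real
  assumes kp: "2 \<le> k" "0 \<le> p" "p \<le> 1"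
begin

definition aa :: "nat \<Rightarrow> real" where "aa n = measure_pmf.expectation (Lp k p n) fJ"
definition qq :: "nat \<Rightarrow> real" where "qq n = measure_pmf.expectation (Lp k p n) indJ"
definition cc :: "nat \<Rightarrow> real" where "cc n = measure_pmf.expectation (Lp k p n) cJ"

lemma aa_id: "aa n = 2 * qq n + cc n"
  unfolding aa_def qq_def cc_def by (rule E_identity[OF kp])

lemma cc_le: "cc n \<le> 0"
  unfolding cc_def using integral_mono[of "Lp k p n" cJ "\<lambda>_. 0"] cJ_le
  by (simp add: integrable_Lp[OF kp])

lemma qq_le: "qq n \<le> 1"
  unfolding qq_def using integral_mono[of "Lp k p n" indJ "\<lambda>_. 1"] indJ_le
  by (simp add: integrable_Lp[OF kp])

lemma aa_ge: "qq n \<le> aa n"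
  unfolding qq_def aa_def using integral_mono[of "Lp k p n" indJ fJ] fJ_ge
  by (simp add: integrable_Lp[OF kp])

lemma nn_aa: "(\<integral>\<^sup>+\<omega>. ennreal (fJ (pref \<omega> n)) \<partial>Xspace k p) = ennreal (aa n)"
proof -
  have "(\<integral>\<^sup>+\<omega>. ennreal (fJ (pref \<omega> n)) \<partial>Xspace k p) = (\<integral>\<^sup>+ys. ennreal (fJ ys) \<partial>measure_pmf (Lp k p n))"
    by (rule nn_pref[OF kp])
  also have "\<dots> = ennreal (aa n)" unfolding aa_def
    by (rule nn_integral_eq_integral) (simp_all add: integrable_Lp[OF kp] fJ_nonneg)
  finally show ?thesis .
qed

lemma cc_eq: "(\<integral>\<omega>. real_of_int (Cnt (Xred \<omega> n)) * indicator {\<omega>. Jtime \<omega> > enat n} \<omega> \<partial>Xspace k p) = cc n"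
  unfolding cc_def by (simp only: cJ_pref int_pref[OF kp])

lemma fseq_mono: "incseq (\<lambda>n \<omega>. ennreal (fJ (pref \<omega> n)))"
  by (auto simp: incseq_def le_fun_def fJ_pref split: enat.splits)

lemma fseq_SUP: "(SUP n. ennreal (fJ (pref \<omega> n))) =
   (case Jtime \<omega> of enat m \<Rightarrow> ennreal (real (length (Xred \<omega> m))) | \<infinity> \<Rightarrow> 0)"
proof (cases "Jtime \<omega>")
  case (enat m)
  show ?thesis
  proof (rule antisym)
    show "(SUP n. ennreal (fJ (pref \<omega> n))) \<le> (case Jtime \<omega> of enat m \<Rightarrow> ennreal (real (length (Xred \<omega> m))) | \<infinity> \<Rightarrow> 0)"
      by (rule SUP_least) (simp add: fJ_pref enat)
    have "ennreal (fJ (pref \<omega> m)) \<le> (SUP n. ennreal (fJ (pref \<omega> n)))" by (rule SUP_upper) simp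
    then show "(case Jtime \<omega> of enat m \<Rightarrow> ennreal (real (length (Xred \<omega> m))) | \<infinity> \<Rightarrow> 0) \<le> (SUP n. ennreal (fJ (pref \<omega> n)))"
      by (simp add: fJ_pref enat)
  qed
next
  case infinity then show ?thesis by (simp add: fJ_pref)
qed

lemma meas_fseq: "(\<lambda>\<omega>. ennreal (fJ (pref \<omega> n))) \<in> borel_measurable (Xspace k p)"
  using measurable_compose[OF meas_pref[OF kp, of n], of "\<lambda>ys. ennreal (fJ ys)" borel] by simp

lemma chi_SUP: "chi k p = (SUP n. ennreal (aa n))"
proof -
  have "chi k p = (\<integral>\<^sup>+\<omega>. (SUP n. ennreal (fJ (pref \<omega> n))) \<partial>Xspace k p)"
    unfolding chi_def by (simp add: fseq_SUP)
  also have "\<dots> = (SUP n. \<integral>\<^sup>+\<omega>. ennreal (fJ (pref \<omega> n)) \<partial>Xspace k p)"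
    by (rule nn_integral_monotone_convergence_SUP[OF fseq_mono meas_fseq])
  also have "\<dots> = (SUP n. ennreal (aa n))" by (simp add: nn_aa)
  finally show ?thesis .
qed

lemma aa_mono: "incseq aa"
proof (rule incseq_SucI)
  fix n
  have "(\<integral>\<^sup>+\<omega>. ennreal (fJ (pref \<omega> n)) \<partial>Xspace k p) \<le> (\<integral>\<^sup>+\<omega>. ennreal (fJ (pref \<omega> (Suc n))) \<partial>Xspace k p)"
    by (rule nn_integral_mono) (use fseq_mono in \<open>auto simp: incseq_def le_fun_def\<close>)
  then have "ennreal (aa n) \<le> ennreal (aa (Suc n))" by (simp add: nn_aa)
  moreover have "0 \<le> aa (Suc n)" using aa_ge[of "Suc n"] by (smt (verit) aa_id cc_le)
  ultimately show "aa n \<le> aa (Suc n)" by (simp add: ennreal_le_iff)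
qed

lemma qq_lim: "qq \<longlonglongrightarrow> 1"
unfolding LIMSEQ_iff
proof (intro allI impI)
  fix r :: real assume r: "0 < r"
  obtain M0 :: nat where M0: "2 / r \<le> real M0" using real_arch_simple by blast
  define M where "M = Suc M0"
  have M: "real M \<ge> 2 / r" "M \<ge> 1" using M0 by (simp_all add: M_def)
  obtain N :: nat where N: "2 * (real M)^2 / r + 1 \<le> real N" using real_arch_simple by blast
  show "\<exists>no. \<forall>n\<ge>no. norm (qq n - 1) < r"
  proof (intro exI allI impI)
    fix n assume n: "N \<le> n"
    have nN: "real N \<le> real n" using n by simp
    have "0 \<le> 2 * (real M)^2 / r" using r by simp
    then have "1 \<le> real n" using N nN by linarith
    then have n1: "n \<ge> 1" by simp
    have low: "real M / (real M + 1) * (1 - (real M)^2 / real n) \<le> qq n"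
      unfolding qq_def by (rule q_lower[OF kp M(2) n1])
    have Mpos: "real M > 0" using M by simp
    have a: "1 / (real M + 1) < r / 2"
    proof -
      have "2 / r < real M + 1" using M by simp
      then show ?thesis using r Mpos by (simp add: field_simps)
    qed
    have b: "(real M)^2 / real n < r / 2"
    proof -
      have "2 * (real M)^2 / r < real n" using N n by simp
      then show ?thesis using r n1 by (simp add: field_simps)
    qed
    have "real M / (real M + 1) = 1 - 1 / (real M + 1)" using Mpos by (simp add: field_simps)
    then have "(1 - 1 / (real M + 1)) * (1 - (real M)^2 / real n) \<le> qq n" using low by simp
    moreover have "(1 - 1 / (real M + 1)) * (1 - (real M)^2 / real n) \<ge> 1 - 1 / (real M + 1) - (real M)^2 / real n"
      using aux_ineq[of "1 / (real M + 1)" "(real M)^2 / real n"] by simp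
    ultimately have "qq n > 1 - r" using a b by linarith
    then show "norm (qq n - 1) < r" using qq_le[of n] by simp
  qed
qed

end

theorem mainTheorem4:
  fixes k :: nat and p :: real
  assumes "k \<ge> 2" and "0 \<le> p" and "p \<le> 1"
  shows "1 \<le> chi k p \<and> chi k p \<le> 2 \<and>
    (chi k p = 2 \<longleftrightarrow>
      (\<lambda>n. \<integral>\<omega>. real_of_int (Cnt (Xred \<omega> n)) * indicator {\<omega>. Jtime \<omega> > enat n} \<omega>
             \<partial>Xspace k p) \<longlonglongrightarrow> 0)"
proof -
  note kp = assms
  have bnd: "\<forall>i. aa k p i \<le> 2" using aa_id[OF kp] cc_le[OF kp] qq_le[OF kp] by (smt (verit))
  obtain A where A: "aa k p \<longlonglongrightarrow> A" "\<forall>i. aa k p i \<le> A"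
    using incseq_convergent[OF aa_mono[OF kp] bnd] by blast
  have "(\<lambda>n. ennreal (aa k p n)) \<longlonglongrightarrow> (SUP n. ennreal (aa k p n))"
    by (rule LIMSEQ_SUP) (use aa_mono[OF kp] in \<open>auto simp: incseq_def intro: ennreal_leI\<close>)
  moreover have "(\<lambda>n. ennreal (aa k p n)) \<longlonglongrightarrow> ennreal A"
    by (rule tendsto_ennrealI[OF A(1)])
  ultimately have chiA: "chi k p = ennreal A"
    unfolding chi_SUP[OF kp] by (rule LIMSEQ_unique)
  have A2: "A \<le> 2" using A(1) bnd by (intro LIMSEQ_le_const2) auto
  have A1: "1 \<le> A"
    using LIMSEQ_le[OF qq_lim[OF kp] A(1)] aa_ge[OF kp] by auto
  have cc_lim: "cc k p \<longlonglongrightarrow> A - 2"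
  proof -
    have "(\<lambda>n. aa k p n - 2 * qq k p n) \<longlonglongrightarrow> A - 2 * 1"
      by (intro tendsto_intros A(1) qq_lim[OF kp])
    moreover have "(\<lambda>n. aa k p n - 2 * qq k p n) = cc k p" using aa_id[OF kp] by (auto simp: fun_eq_iff)
    ultimately show ?thesis by simp
  qed
  have seq: "(\<lambda>n. \<integral>\<omega>. real_of_int (Cnt (Xred \<omega> n)) * indicator {\<omega>. Jtime \<omega> > enat n} \<omega> \<partial>Xspace k p) = cc k p"
    by (rule ext) (rule cc_eq[OF kp])
  have "chi k p = 2 \<longleftrightarrow> A = 2"
    using A1 unfolding chiA by (metis ennreal_inj ennreal_numeral le_numeral_extra(1) order.trans zero_le_numeral numeral_le_iff)
  also have "\<dots> \<longleftrightarrow> cc k p \<longlonglongrightarrow> 0"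
  proof
    assume "A = 2" then show "cc k p \<longlonglongrightarrow> 0" using cc_lim by simp
  next
    assume "cc k p \<longlonglongrightarrow> 0"
    then have "A - 2 = 0" using cc_lim LIMSEQ_unique by blast
    then show "A = 2" by simp
  qed
  finally have eq: "chi k p = 2 \<longleftrightarrow> cc k p \<longlonglongrightarrow> 0" .
  have "1 \<le> chi k p" unfolding chiA using A1 by simp
  moreover have "chi k p \<le> 2" unfolding chiA using A2
    by (metis ennreal_leI ennreal_numeral)
  ultimately show ?thesis using eq seq by simp
qed


end
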